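(* Let $V_A,V_B\subseteq\mathbb{R}^d$ be $k$-dimensional subspaces whose principal angles all equal a common $\theta\in[0,\pi/2]$, with principal vectors $(u_i,v_i)$, and let $w\in\mathbb{R}^d$, $\|w\|=1$, satisfy $\langle w,u_i\rangle=\langle w,v_i\rangle=\alpha$ for all $i=1,\dots,k$. Then $$\eta(V_A,V_B,w) = \alpha\sqrt{k}\,|\tan(\theta/2)|,$$ and the debate advantage $\Delta = \sqrt{(K_A^* )^2+\eta^2}-K_A^*$ (where $K_A^*=\|\Pi_{V_A}w\|$) behaves as $\Delta \sim k\alpha^2\tan^2(\theta/2)/(2K_A^* )$ for small $\theta$ and as $\Delta\sim \alpha\sqrt{k}\tan(\theta/2)$ for large $\theta$.
   Context: Principal angles $\theta_i$ and principal vectors $(u_i,v_i)$: $\cos\theta_i=\max\{\langle u,v\rangle: u\in V_A,\|u\|=1,u\perp u_1..u_{i-1};\ v\in V_B,\|v\|=1,v\perp v_1..v_{i-1}\}$, maximizers $(u_i,v_i)$ with $\langle u_i,v_j\rangle=\cos\theta_i\delta_{ij}$. For $\theta_i>0$, $\tilde v_i=(v_i-\cos\theta_iu_i)/\sin\theta_i$, and the private information value is $\eta(V_A,V_B,w)=\sqrt{\sum_{i:\theta_i>0}\langle w,\tilde v_i\rangle^2}$. "Small $\theta$" refers to the regime $\eta\ll K_A^*$ and "large $\theta$" to the regime $\eta\gg K_A^*$. *)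

theory Defs
  imports "HOL-Analysis.Analysis"
begin

definition principal_vectors ::
  "('a::euclidean_space) set \<Rightarrow> 'a set \<Rightarrow> nat \<Rightarrow> (nat \<Rightarrow> real) \<Rightarrow> (nat \<Rightarrow> 'a) \<Rightarrow> (nat \<Rightarrow> 'a) \<Rightarrow> bool"
where
  "principal_vectors VA VB k th u v \<longleftrightarrow>
     (\<forall>i<k. th i \<in> {0..pi/2} \<and> u i \<in> VA \<and> v i \<in> VB \<and> norm (u i) = 1 \<and> norm (v i) = 1 \<and>
        (\<forall>j<i. u i \<bullet> u j = 0 \<and> v i \<bullet> v j = 0) \<and>
        cos (th i) = u i \<bullet> v i \<and>
        (\<forall>x y. x \<in> VA \<and> y \<in> VB \<and> norm x = 1 \<and> norm y = 1 \<and>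
               (\<forall>j<i. x \<bullet> u j = 0 \<and> y \<bullet> v j = 0) \<longrightarrow> x \<bullet> y \<le> cos (th i))) \<and>
     (\<forall>i<k. \<forall>j<k. u i \<bullet> v j = (if i = j then cos (th i) else 0))"

definition eta_val :: "nat \<Rightarrow> (nat \<Rightarrow> real) \<Rightarrow> (nat \<Rightarrow> 'a::euclidean_space) \<Rightarrow> (nat \<Rightarrow> 'a) \<Rightarrow> 'a \<Rightarrow> real"
where
  "eta_val k th u v w =
     sqrt (\<Sum>i\<in>{i. i < k \<and> th i > 0}.
             (w \<bullet> ((1 / sin (th i)) *\<^sub>R (v i - cos (th i) *\<^sub>R u i)))\<^sup>2)"

definition orth_proj :: "('a::euclidean_space) set \<Rightarrow> 'a \<Rightarrow> 'a" where
  "orth_proj V w = (THE p. p \<in> V \<and> (\<forall>x\<in>V. (w - p) \<bullet> x = 0))"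

definition K_star :: "('a::euclidean_space) set \<Rightarrow> 'a \<Rightarrow> real" where
  "K_star VA w = norm (orth_proj VA w)"

definition debate_adv :: "real \<Rightarrow> real \<Rightarrow> real" where
  "debate_adv K e = sqrt (K\<^sup>2 + e\<^sup>2) - K"

definition equal_angle_config ::
  "('a::euclidean_space) set \<Rightarrow> 'a set \<Rightarrow> nat \<Rightarrow> real \<Rightarrow> (nat \<Rightarrow> real) \<Rightarrow> (nat \<Rightarrow> 'a) \<Rightarrow> (nat \<Rightarrow> 'a) \<Rightarrow> 'a \<Rightarrow> real \<Rightarrow> bool"
where
  "equal_angle_config VA VB k th0 th u v w a \<longleftrightarrow>
     subspace VA \<and> subspace VB \<and> dim VA = k \<and> dim VB = k \<and>
     th0 \<in> {0..pi/2} \<and> principal_vectors VA VB k th u v \<and> (\<forall>i<k. th i = th0) \<and>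
     norm w = 1 \<and> (\<forall>i<k. w \<bullet> u i = a \<and> w \<bullet> v i = a)"

end

theory Submission
  imports Defs
begin


lemma half_tan_eq:
  fixes t :: real
  assumes "0 < t" "t \<le> pi/2"
  shows "(1 - cos t) / sin t = tan (t/2)"
proof -
  have s: "sin t > 0" using assms by (intro sin_gt_zero) auto
  have c: "cos t + 1 > 0" using cos_ge_minus_one[of t] assms
    by (smt (verit) cos_ge_zero divide_nonneg_nonneg pi_ge_zero)
  have "tan (t/2) = sin t / (cos t + 1)" using tan_half[of "t/2"] by simp
  also have "\<dots> = (1 - cos t) / sin t"
    using s c sin_squared_eq[of t] by (simp add: field_simps power2_eq_square)
  finally show ?thesis by simp
qed

lemma tan_half_nonneg:
  fixes t :: real
  assumes "0 \<le> t" "t \<le> pi/2"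
  shows "0 \<le> tan (t/2)"
proof (cases "t = 0")
  case False
  then show ?thesis using assms by (intro less_imp_le tan_gt_zero) auto
qed simp

lemma eta_formula:
  assumes "equal_angle_config VA VB k \<theta> th u v w \<alpha>"
  shows "eta_val k th u v w = \<bar>\<alpha>\<bar> * sqrt (real k) * \<bar>tan (\<theta> / 2)\<bar>"
proof -
  from assms have th: "\<forall>i<k. th i = \<theta>" and rng: "0 \<le> \<theta>" "\<theta> \<le> pi/2"
    and wa: "\<forall>i<k. w \<bullet> u i = \<alpha> \<and> w \<bullet> v i = \<alpha>"
    unfolding equal_angle_config_def by auto
  show ?thesis
  proof (cases "\<theta> = 0")
    case True
    then have E: "{i. i < k \<and> th i > 0} = {}" using th by auto
    show ?thesis unfolding eta_val_def E using True by simp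
  next
    case False
    then have pos: "\<theta> > 0" using rng by simp
    have S: "{i. i < k \<and> th i > 0} = {..<k}" using th pos by auto
    have tm: "(w \<bullet> ((1 / sin (th i)) *\<^sub>R (v i - cos (th i) *\<^sub>R u i)))\<^sup>2 = (\<alpha> * tan (\<theta>/2))\<^sup>2"
      if "i \<in> {..<k}" for i
    proof -
      have "w \<bullet> ((1 / sin (th i)) *\<^sub>R (v i - cos (th i) *\<^sub>R u i)) = (\<alpha> - cos \<theta> * \<alpha>) / sin \<theta>"
        using that th wa by (simp add: inner_diff_right divide_simps)
      also have "\<dots> = \<alpha> * ((1 - cos \<theta>) / sin \<theta>)" by (simp add: algebra_simps)
      also have "\<dots> = \<alpha> * tan (\<theta>/2)" using half_tan_eq[OF pos rng(2)] by simp
      finally show ?thesis by simp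
    qed
    have "eta_val k th u v w = sqrt (real k * (\<alpha> * tan (\<theta>/2))\<^sup>2)"
      unfolding eta_val_def S using tm by simp
    also have "\<dots> = \<bar>\<alpha>\<bar> * sqrt (real k) * \<bar>tan (\<theta> / 2)\<bar>"
      by (simp add: real_sqrt_mult abs_mult)
    finally show ?thesis .
  qed
qed

lemma small_bound:
  fixes K e \<epsilon> :: real
  assumes "K > 0" "e > 0" "e < \<epsilon> * K"
  shows "\<bar>debate_adv K e / (e\<^sup>2 / (2 * K)) - 1\<bar> < \<epsilon>"
proof -
  define t where "t = e / K"
  have t: "t > 0" "t < \<epsilon>" using assms by (auto simp: t_def field_simps)
  have eK: "e = t * K" using assms by (simp add: t_def)
  have sq: "sqrt (K\<^sup>2 + e\<^sup>2) = K * sqrt (1 + t\<^sup>2)"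
  proof -
    have "K\<^sup>2 + e\<^sup>2 = K\<^sup>2 * (1 + t\<^sup>2)" by (simp add: eK power_mult_distrib algebra_simps)
    then show ?thesis using assms by (simp add: real_sqrt_mult)
  qed
  define r where "r = sqrt (1 + t\<^sup>2)"
  have r1: "r > 1" using t by (simp add: r_def)
  have r2: "r \<le> 1 + t"
  proof -
    have "1 + t\<^sup>2 \<le> (1 + t)\<^sup>2" using t by (simp add: power2_eq_square algebra_simps)
    then have "sqrt (1 + t\<^sup>2) \<le> sqrt ((1 + t)\<^sup>2)" by (rule real_sqrt_le_mono)
    then show ?thesis using t by (simp add: r_def add.commute)
  qed
  have rr: "r\<^sup>2 = 1 + t\<^sup>2" by (simp add: r_def)
  have "debate_adv K e / (e\<^sup>2 / (2 * K)) = 2 * (r - 1) / t\<^sup>2"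
  proof -
    have "debate_adv K e = K * r - K" unfolding debate_adv_def sq r_def by simp
    then show ?thesis using assms t unfolding eK by (simp add: field_simps power2_eq_square)
  qed
  also have "\<dots> = 2 / (r + 1)"
    using rr r1 t by (simp add: field_simps power2_eq_square)
  finally have eq: "debate_adv K e / (e\<^sup>2 / (2 * K)) = 2 / (r + 1)" .
  have "\<bar>2 / (r + 1) - 1\<bar> = (r - 1) / (r + 1)" using r1 by (simp add: field_simps)
  also have "\<dots> \<le> r - 1" using r1 by (simp add: field_simps)
  also have "\<dots> < \<epsilon>" using r2 t by simp
  finally show ?thesis using eq by simp
qed

lemma large_bound:
  fixes K e \<epsilon> :: real
  assumes "K \<ge> 0" "e > 0" "\<epsilon> > 0" "e > (1/\<epsilon>) * K"
  shows "\<bar>debate_adv K e / e - 1\<bar> < \<epsilon>"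
proof -
  define s where "s = K / e"
  have s: "s \<ge> 0" "s < \<epsilon>" using assms by (auto simp: s_def field_simps)
  have Ke: "K = s * e" using assms by (simp add: s_def)
  have sq: "sqrt (K\<^sup>2 + e\<^sup>2) = e * sqrt (s\<^sup>2 + 1)"
  proof -
    have "K\<^sup>2 + e\<^sup>2 = e\<^sup>2 * (s\<^sup>2 + 1)" by (simp add: Ke power_mult_distrib algebra_simps)
    then show ?thesis using assms by (simp add: real_sqrt_mult)
  qed
  define r where "r = sqrt (s\<^sup>2 + 1)"
  have r1: "r \<ge> 1" by (simp add: r_def)
  have r2: "r \<le> 1 + s"
  proof -
    have "1 + s\<^sup>2 \<le> (1 + s)\<^sup>2" using s by (simp add: power2_eq_square algebra_simps)
    then have "sqrt (1 + s\<^sup>2) \<le> sqrt ((1 + s)\<^sup>2)" by (rule real_sqrt_le_mono)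
    then show ?thesis using s by (simp add: r_def add.commute)
  qed
  have r3: "r \<ge> s" using s by (simp add: r_def real_le_rsqrt)
  have eq: "debate_adv K e / e = r - s"
  proof -
    have "debate_adv K e = e * r - K" unfolding debate_adv_def sq r_def by simp
    then show ?thesis using assms unfolding Ke by (simp add: field_simps)
  qed
  show ?thesis using eq r1 r2 r3 s by simp
qed

theorem corollary2p11:
  fixes VA VB :: "('a::euclidean_space) set" and k :: nat and \<theta> :: real
    and th :: "nat \<Rightarrow> real" and u v :: "nat \<Rightarrow> 'a" and w :: 'a and \<alpha> :: real
  assumes "equal_angle_config VA VB k \<theta> th u v w \<alpha>"
  shows "eta_val k th u v w = \<bar>\<alpha>\<bar> * sqrt (real k) * \<bar>tan (\<theta> / 2)\<bar> \<and>
         (\<forall>\<epsilon>>0. \<exists>\<delta>>0. \<forall>(VA'::'a set) VB' k' \<theta>' th' u' v' w' \<alpha>'.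
           equal_angle_config VA' VB' k' \<theta>' th' u' v' w' \<alpha>' \<and>
           K_star VA' w' > 0 \<and> eta_val k' th' u' v' w' > 0 \<and>
           eta_val k' th' u' v' w' < \<delta> * K_star VA' w' \<longrightarrow>
           \<bar>debate_adv (K_star VA' w') (eta_val k' th' u' v' w')
              / (real k' * \<alpha>'\<^sup>2 * (tan (\<theta>' / 2))\<^sup>2 / (2 * K_star VA' w')) - 1\<bar> < \<epsilon>) \<and>
         (\<forall>\<epsilon>>0. \<exists>M>0. \<forall>(VA'::'a set) VB' k' \<theta>' th' u' v' w' \<alpha>'.
           equal_angle_config VA' VB' k' \<theta>' th' u' v' w' \<alpha>' \<and>
           eta_val k' th' u' v' w' > 0 \<and>
           eta_val k' th' u' v' w' > M * K_star VA' w' \<longrightarrow>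
           \<bar>debate_adv (K_star VA' w') (eta_val k' th' u' v' w')
              / (\<bar>\<alpha>'\<bar> * sqrt (real k') * tan (\<theta>' / 2)) - 1\<bar> < \<epsilon>)"
  proof -
  have p1: "eta_val k th u v w = \<bar>\<alpha>\<bar> * sqrt (real k) * \<bar>tan (\<theta> / 2)\<bar>"
    using eta_formula[OF assms] .
  have p2: "\<forall>\<epsilon>>0. \<exists>\<delta>>0. \<forall>(VA'::'a set) VB' k' \<theta>' th' u' v' w' \<alpha>'.
           equal_angle_config VA' VB' k' \<theta>' th' u' v' w' \<alpha>' \<and>
           K_star VA' w' > 0 \<and> eta_val k' th' u' v' w' > 0 \<and>
           eta_val k' th' u' v' w' < \<delta> * K_star VA' w' \<longrightarrow>
           \<bar>debate_adv (K_star VA' w') (eta_val k' th' u' v' w')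
              / (real k' * \<alpha>'\<^sup>2 * (tan (\<theta>' / 2))\<^sup>2 / (2 * K_star VA' w')) - 1\<bar> < \<epsilon>"
  proof (intro allI impI)
    fix \<epsilon> :: real assume ep: "\<epsilon> > 0"
    show "\<exists>\<delta>>0. \<forall>(VA'::'a set) VB' k' \<theta>' th' u' v' w' \<alpha>'.
           equal_angle_config VA' VB' k' \<theta>' th' u' v' w' \<alpha>' \<and>
           K_star VA' w' > 0 \<and> eta_val k' th' u' v' w' > 0 \<and>
           eta_val k' th' u' v' w' < \<delta> * K_star VA' w' \<longrightarrow>
           \<bar>debate_adv (K_star VA' w') (eta_val k' th' u' v' w')
              / (real k' * \<alpha>'\<^sup>2 * (tan (\<theta>' / 2))\<^sup>2 / (2 * K_star VA' w')) - 1\<bar> < \<epsilon>"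
    proof (intro exI[of _ \<epsilon>] conjI ep allI impI)
      fix VA' :: "'a set" and VB' k' \<theta>' th' u' v' w' \<alpha>'
      assume H: "equal_angle_config VA' VB' k' \<theta>' th' u' v' w' \<alpha>' \<and>
           K_star VA' w' > 0 \<and> eta_val k' th' u' v' w' > 0 \<and>
           eta_val k' th' u' v' w' < \<epsilon> * K_star VA' w'"
      have e: "eta_val k' th' u' v' w' = \<bar>\<alpha>'\<bar> * sqrt (real k') * \<bar>tan (\<theta>' / 2)\<bar>"
        using eta_formula H by blast
      have "real k' * \<alpha>'\<^sup>2 * (tan (\<theta>' / 2))\<^sup>2 = (eta_val k' th' u' v' w')\<^sup>2"
        unfolding e by (simp add: power_mult_distrib)
      then show "\<bar>debate_adv (K_star VA' w') (eta_val k' th' u' v' w')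
              / (real k' * \<alpha>'\<^sup>2 * (tan (\<theta>' / 2))\<^sup>2 / (2 * K_star VA' w')) - 1\<bar> < \<epsilon>"
        using small_bound H by simp
    qed
  qed
  have p3: "\<forall>\<epsilon>>0. \<exists>M>0. \<forall>(VA'::'a set) VB' k' \<theta>' th' u' v' w' \<alpha>'.
           equal_angle_config VA' VB' k' \<theta>' th' u' v' w' \<alpha>' \<and>
           eta_val k' th' u' v' w' > 0 \<and>
           eta_val k' th' u' v' w' > M * K_star VA' w' \<longrightarrow>
           \<bar>debate_adv (K_star VA' w') (eta_val k' th' u' v' w')
              / (\<bar>\<alpha>'\<bar> * sqrt (real k') * tan (\<theta>' / 2)) - 1\<bar> < \<epsilon>"
  proof (intro allI impI)
    fix \<epsilon> :: real assume ep: "\<epsilon> > 0"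
    show "\<exists>M>0. \<forall>(VA'::'a set) VB' k' \<theta>' th' u' v' w' \<alpha>'.
           equal_angle_config VA' VB' k' \<theta>' th' u' v' w' \<alpha>' \<and>
           eta_val k' th' u' v' w' > 0 \<and>
           eta_val k' th' u' v' w' > M * K_star VA' w' \<longrightarrow>
           \<bar>debate_adv (K_star VA' w') (eta_val k' th' u' v' w')
              / (\<bar>\<alpha>'\<bar> * sqrt (real k') * tan (\<theta>' / 2)) - 1\<bar> < \<epsilon>"
    proof (intro exI[of _ "1/\<epsilon>"] conjI allI impI)
      show "1/\<epsilon> > 0" using ep by simp
      fix VA' :: "'a set" and VB' k' \<theta>' th' u' v' w' \<alpha>'
      assume H: "equal_angle_config VA' VB' k' \<theta>' th' u' v' w' \<alpha>' \<and>
           eta_val k' th' u' v' w' > 0 \<and>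
           eta_val k' th' u' v' w' > (1/\<epsilon>) * K_star VA' w'"
      have e: "eta_val k' th' u' v' w' = \<bar>\<alpha>'\<bar> * sqrt (real k') * \<bar>tan (\<theta>' / 2)\<bar>"
        using eta_formula H by blast
      have "0 \<le> \<theta>'" "\<theta>' \<le> pi/2" using H unfolding equal_angle_config_def by auto
      then have "tan (\<theta>'/2) \<ge> 0" by (rule tan_half_nonneg)
      then have e2: "\<bar>\<alpha>'\<bar> * sqrt (real k') * tan (\<theta>' / 2) = eta_val k' th' u' v' w'"
        using e by simp
      have K: "K_star VA' w' \<ge> 0" unfolding K_star_def by simp
      show "\<bar>debate_adv (K_star VA' w') (eta_val k' th' u' v' w')
              / (\<bar>\<alpha>'\<bar> * sqrt (real k') * tan (\<theta>' / 2)) - 1\<bar> < \<epsilon>"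
        unfolding e2 using large_bound[OF K _ ep] H by blast
    qed
  qed
  show ?thesis using p1 p2 p3 by blast
qed

end
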